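(* Let $\{S;\tilde w_1,\dots,\tilde w_N;p_1,\dots,p_N\}$ be a DIFS with associated Markov chain $\{\tilde X_k\}$, and let $C\subset S$ be nonempty. (a) $C$ is a closed class of $\{\tilde X_k\}$ if and only if $\bigcup_{i=1}^N\tilde w_i(C)\subset C$. (b) If $C$ is a communication class of $\{\tilde X_k\}$, then $\bigcup_{i=1}^N\tilde w_i(C)\supset C$.
   Context: $\mathcal D^n(\delta)=\{\delta m:m\in\mathbb Z^n\}$ for fixed $\delta>0$. A DIFS $\{S;\tilde w_1,\dots,\tilde w_N;p_1,\dots,p_N\}$ consists of $S\subset\mathcal D^n(\delta)$, maps $\tilde w_i:S\to S$, and functions $p_i:S\to(0,1]$ with $\sum_ip_i(\tilde x)=1$ for every $\tilde x\in S$; its associated Markov chain on $S$ has transition probabilities $P(\tilde x,\tilde y)=\sum_ip_i(\tilde x)\mathbf 1_{\{\tilde y\}}(\tilde w_i(\tilde x))$. A state $\tilde y$ is accessible from $\tilde x$ if $P^k(\tilde x,\tilde y)>0$ for some integer $k\ge1$. A communication class is a maximal nonempty subset $C$ such that for all $\tilde x,\tilde y\in C$ (not necessarily distinct) $\tilde y$ is accessible from $\tilde x$. A closed class is a nonempty subset $C$ such that every state accessible from a state of $C$ belongs to $C$. *)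

theory Defs
  imports "HOL-Analysis.Analysis"
begin

definition lattice :: "real \<Rightarrow> (real ^ 'n) set" where
  "lattice \<delta> = {x. \<exists>m :: int ^ 'n. \<forall>j. x $ j = \<delta> * of_int (m $ j)}"

definition DIFS ::
  "real \<Rightarrow> (real ^ 'n) set \<Rightarrow> nat \<Rightarrow> (nat \<Rightarrow> real ^ 'n \<Rightarrow> real ^ 'n)
     \<Rightarrow> (nat \<Rightarrow> real ^ 'n \<Rightarrow> real) \<Rightarrow> bool" where
  "DIFS \<delta> S N w p \<longleftrightarrow>
     \<delta> > 0 \<and> S \<subseteq> lattice \<delta> \<and>
     (\<forall>i\<in>{1..N}. \<forall>x\<in>S. w i x \<in> S) \<and>
     (\<forall>i\<in>{1..N}. \<forall>x\<in>S. 0 < p i x \<and> p i x \<le> 1) \<and>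
     (\<forall>x\<in>S. (\<Sum>i=1..N. p i x) = 1)"

definition trans_prob ::
  "nat \<Rightarrow> (nat \<Rightarrow> 'a \<Rightarrow> 'a) \<Rightarrow> (nat \<Rightarrow> 'a \<Rightarrow> real) \<Rightarrow> 'a \<Rightarrow> 'a \<Rightarrow> real" where
  "trans_prob N w p x y = (\<Sum>i=1..N. p i x * (if w i x = y then 1 else 0))"

text \<open>k-step transition probabilities P^k (matrix powers); the sum in the matrix product
  P^(k+1)(x,y) = sum_z P(x,z) P^k(z,y) is restricted to the finitely many z with P(x,z) possibly
  nonzero, i.e. z among w_1(x),...,w_N(x).\<close>
fun trans_pow ::
  "nat \<Rightarrow> (nat \<Rightarrow> 'a \<Rightarrow> 'a) \<Rightarrow> (nat \<Rightarrow> 'a \<Rightarrow> real) \<Rightarrow> nat \<Rightarrow> 'a \<Rightarrow> 'a \<Rightarrow> real" where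
  "trans_pow N w p 0 x y = (if x = y then 1 else 0)"
| "trans_pow N w p (Suc k) x y =
     (\<Sum>z\<in>(\<lambda>i. w i x) ` {1..N}. trans_prob N w p x z * trans_pow N w p k z y)"

definition accessible ::
  "nat \<Rightarrow> (nat \<Rightarrow> 'a \<Rightarrow> 'a) \<Rightarrow> (nat \<Rightarrow> 'a \<Rightarrow> real) \<Rightarrow> 'a \<Rightarrow> 'a \<Rightarrow> bool" where
  "accessible N w p x y \<longleftrightarrow> (\<exists>k\<ge>1. trans_pow N w p k x y > 0)"

definition closed_class ::
  "'a set \<Rightarrow> nat \<Rightarrow> (nat \<Rightarrow> 'a \<Rightarrow> 'a) \<Rightarrow> (nat \<Rightarrow> 'a \<Rightarrow> real) \<Rightarrow> 'a set \<Rightarrow> bool" where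
  "closed_class S N w p C \<longleftrightarrow> C \<noteq> {} \<and> C \<subseteq> S \<and>
     (\<forall>x\<in>C. \<forall>y\<in>S. accessible N w p x y \<longrightarrow> y \<in> C)"

definition communicating ::
  "nat \<Rightarrow> (nat \<Rightarrow> 'a \<Rightarrow> 'a) \<Rightarrow> (nat \<Rightarrow> 'a \<Rightarrow> real) \<Rightarrow> 'a set \<Rightarrow> bool" where
  "communicating N w p C \<longleftrightarrow> C \<noteq> {} \<and> (\<forall>x\<in>C. \<forall>y\<in>C. accessible N w p x y)"

definition communication_class ::
  "'a set \<Rightarrow> nat \<Rightarrow> (nat \<Rightarrow> 'a \<Rightarrow> 'a) \<Rightarrow> (nat \<Rightarrow> 'a \<Rightarrow> real) \<Rightarrow> 'a set \<Rightarrow> bool" where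
  "communication_class S N w p C \<longleftrightarrow> C \<subseteq> S \<and> communicating N w p C \<and>
     (\<forall>D. C \<subseteq> D \<and> D \<subseteq> S \<and> communicating N w p D \<longrightarrow> D = C)"

end

theory Submission
  imports Defs
begin

lemma tp_nonneg:
  assumes wS: "\<forall>i\<in>{1..N}. \<forall>x\<in>S. w i x \<in> S" and pp: "\<forall>i\<in>{1..N}. \<forall>x\<in>S. 0 < p i x"
  shows "x \<in> S \<Longrightarrow> trans_pow N w p k x y \<ge> 0"
proof (induction k arbitrary: x)
  case 0 then show ?case by simp
next
  case (Suc k)
  have "\<And>z. z \<in> (\<lambda>i. w i x) ` {1..N} \<Longrightarrow> trans_prob N w p x z * trans_pow N w p k z y \<ge> 0"
  proof -
    fix z assume "z \<in> (\<lambda>i. w i x) ` {1..N}"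
    then have "z \<in> S" using wS Suc.prems by auto
    moreover have "trans_prob N w p x z \<ge> 0" unfolding trans_prob_def
      using pp Suc.prems by (intro sum_nonneg) (auto intro: less_imp_le)
    ultimately show "trans_prob N w p x z * trans_pow N w p k z y \<ge> 0"
      using Suc.IH by simp
  qed
  then show ?case by (simp add: sum_nonneg)
qed

lemma tp_prob_pos:
  assumes pp: "\<forall>i\<in>{1..N}. \<forall>x\<in>S. 0 < p i x" and x: "x \<in> S" and i: "i \<in> {1..N}"
  shows "trans_prob N w p x (w i x) > 0"
proof -
  have "0 < (\<Sum>j\<in>{1..N}. p j x * (if w j x = w i x then 1 else 0))"
    using pp x i by (intro sum_pos2[of _ i]) (auto intro: less_imp_le)
  then show ?thesis unfolding trans_prob_def by simp
qed

lemma tp_step: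
  assumes wS: "\<forall>i\<in>{1..N}. \<forall>x\<in>S. w i x \<in> S" and pp: "\<forall>i\<in>{1..N}. \<forall>x\<in>S. 0 < p i x"
    and x: "x \<in> S"
  shows "trans_pow N w p (Suc k) x y > 0 \<longleftrightarrow> (\<exists>i\<in>{1..N}. trans_pow N w p k (w i x) y > 0)"
proof
  assume h: "trans_pow N w p (Suc k) x y > 0"
  show "\<exists>i\<in>{1..N}. trans_pow N w p k (w i x) y > 0"
  proof (rule ccontr)
    assume "\<not> ?thesis"
    then have "\<forall>i\<in>{1..N}. trans_pow N w p k (w i x) y \<le> 0" by auto
    then have "\<forall>z\<in>(\<lambda>i. w i x) ` {1..N}. trans_prob N w p x z * trans_pow N w p k z y \<le> 0"
    proof (intro ballI)
      fix z assume "z \<in> (\<lambda>i. w i x) ` {1..N}" and hh: "\<forall>i\<in>{1..N}. trans_pow N w p k (w i x) y \<le> 0"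
      then obtain j where j: "j \<in> {1..N}" "z = w j x" by auto
      show "trans_prob N w p x z * trans_pow N w p k z y \<le> 0"
      proof -
        have a: "trans_prob N w p x (w j x) \<ge> 0" using tp_prob_pos[OF pp x j(1), of w] by simp
        have b: "trans_pow N w p k (w j x) y \<le> 0" using hh j(1) by blast
        show ?thesis using mult_nonneg_nonpos[OF a b] j(2) by simp
      qed
    qed
    then have "trans_pow N w p (Suc k) x y \<le> 0" unfolding trans_pow.simps by (intro sum_nonpos) blast
    with h show False by simp
  qed
next
  assume "\<exists>i\<in>{1..N}. trans_pow N w p k (w i x) y > 0"
  then obtain i where i: "i \<in> {1..N}" and pos: "trans_pow N w p k (w i x) y > 0" by auto
  have nn: "\<forall>z\<in>(\<lambda>i. w i x) ` {1..N}. trans_prob N w p x z * trans_pow N w p k z y \<ge> 0"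
  proof
    fix z assume "z \<in> (\<lambda>i. w i x) ` {1..N}"
    then obtain j where j: "j \<in> {1..N}" "z = w j x" by auto
    show "trans_prob N w p x z * trans_pow N w p k z y \<ge> 0"
      using j tp_nonneg[OF wS pp, of "w j x" k y] tp_prob_pos[OF pp x j(1), of w] x wS by auto
  qed
  have "0 < trans_prob N w p x (w i x) * trans_pow N w p k (w i x) y"
    using tp_prob_pos[OF pp x i] pos by simp
  then have "0 < (\<Sum>z\<in>(\<lambda>i. w i x) ` {1..N}. trans_prob N w p x z * trans_pow N w p k z y)"
    using nn i by (intro sum_pos2[of _ "w i x"]) auto
  then show "trans_pow N w p (Suc k) x y > 0" by simp
qed

lemma tp_relpow:
  assumes wS: "\<forall>i\<in>{1..N}. \<forall>x\<in>S. w i x \<in> S" and pp: "\<forall>i\<in>{1..N}. \<forall>x\<in>S. 0 < p i x"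
  defines "R \<equiv> {(x, w i x) | x i. x \<in> S \<and> i \<in> {1..N}}"
  shows "x \<in> S \<Longrightarrow> trans_pow N w p k x y > 0 \<longleftrightarrow> (x, y) \<in> R ^^ k"
proof (induction k arbitrary: x)
  case 0 then show ?case by simp
next
  case (Suc k)
  have "trans_pow N w p (Suc k) x y > 0 \<longleftrightarrow> (\<exists>i\<in>{1..N}. (w i x, y) \<in> R ^^ k)"
    using tp_step[OF wS pp Suc.prems] Suc.IH wS Suc.prems by auto
  also have "\<dots> \<longleftrightarrow> (x, y) \<in> R ^^ Suc k"
  proof
    assume "\<exists>i\<in>{1..N}. (w i x, y) \<in> R ^^ k"
    then obtain i where "i \<in> {1..N}" "(w i x, y) \<in> R ^^ k" by auto
    moreover have "(x, w i x) \<in> R" using \<open>i \<in> {1..N}\<close> Suc.prems R_def by auto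
    ultimately show "(x, y) \<in> R ^^ Suc k" by (meson relpow_Suc_I2)
  next
    assume "(x, y) \<in> R ^^ Suc k"
    then obtain z where "(x, z) \<in> R" "(z, y) \<in> R ^^ k" by (meson relpow_Suc_D2)
    then show "\<exists>i\<in>{1..N}. (w i x, y) \<in> R ^^ k" unfolding R_def by auto
  qed
  finally show ?case .
qed

lemma acc_trancl:
  assumes wS: "\<forall>i\<in>{1..N}. \<forall>x\<in>S. w i x \<in> S" and pp: "\<forall>i\<in>{1..N}. \<forall>x\<in>S. 0 < p i x"
    and x: "x \<in> S"
  shows "accessible N w p x y \<longleftrightarrow> (x, y) \<in> {(x, w i x) | x i. x \<in> S \<and> i \<in> {1..N}}\<^sup>+"
proof -
  have e: "\<And>k. 0 < trans_pow N w p k x y \<longleftrightarrow> (x, y) \<in> {(x, w i x) | x i. x \<in> S \<and> i \<in> {1..N}} ^^ k"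
    using tp_relpow[OF wS pp x] by simp
  have o: "\<And>k::nat. 1 \<le> k \<longleftrightarrow> 0 < k" by linarith
  show ?thesis unfolding accessible_def trancl_power e using o by blast
qed

theorem theorem11:
  fixes \<delta> :: real and S C :: "(real ^ 'n) set" and N :: nat
    and w :: "nat \<Rightarrow> real ^ 'n \<Rightarrow> real ^ 'n" and p :: "nat \<Rightarrow> real ^ 'n \<Rightarrow> real"
  assumes "DIFS \<delta> S N w p" and "C \<subseteq> S" and "C \<noteq> {}"
  shows "(closed_class S N w p C \<longleftrightarrow> (\<Union>i\<in>{1..N}. w i ` C) \<subseteq> C)
       \<and> (communication_class S N w p C \<longrightarrow> C \<subseteq> (\<Union>i\<in>{1..N}. w i ` C))"
proof -
  have wS: "\<forall>i\<in>{1..N}. \<forall>x\<in>S. w i x \<in> S" and pp: "\<forall>i\<in>{1..N}. \<forall>x\<in>S. 0 < p i x"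
    using assms(1) unfolding DIFS_def by auto
  define R where "R = {(x, w i x) | x i. x \<in> S \<and> i \<in> {1..N}}"
  have acc: "\<And>x y. x \<in> S \<Longrightarrow> accessible N w p x y \<longleftrightarrow> (x, y) \<in> R\<^sup>+"
    using acc_trancl[OF wS pp] R_def by auto
  have RS: "\<And>x y. (x, y) \<in> R\<^sup>+ \<Longrightarrow> x \<in> S \<and> y \<in> S"
  proof -
    fix x y assume "(x, y) \<in> R\<^sup>+"
    then show "x \<in> S \<and> y \<in> S"
      by (induction rule: trancl_induct) (use wS in \<open>auto simp: R_def\<close>)
  qed
  have A: "closed_class S N w p C \<longleftrightarrow> (\<Union>i\<in>{1..N}. w i ` C) \<subseteq> C"
  proof
    assume cc: "closed_class S N w p C"
    show "(\<Union>i\<in>{1..N}. w i ` C) \<subseteq> C"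
    proof clarify
      fix i x assume i: "i \<in> {1..N}" and x: "x \<in> C"
      have xS: "x \<in> S" using x assms(2) by auto
      have "(x, w i x) \<in> R\<^sup>+" using i xS R_def by auto
      then show "w i x \<in> C" using cc x xS acc wS i unfolding closed_class_def by auto
    qed
  next
    assume im: "(\<Union>i\<in>{1..N}. w i ` C) \<subseteq> C"
    have "\<And>x y. (x, y) \<in> R\<^sup>+ \<Longrightarrow> x \<in> C \<Longrightarrow> y \<in> C"
    proof -
      fix x y assume "(x, y) \<in> R\<^sup>+" "x \<in> C"
      then show "y \<in> C"
      proof (induction rule: trancl_induct)
        case (base y)
        then obtain i where "i \<in> {1..N}" "y = w i x" by (auto simp: R_def)
        then show ?case using im base by blast
      next
        case (step y z)
        then obtain i where "i \<in> {1..N}" "z = w i y" by (auto simp: R_def)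
        then show ?case using im step by blast
      qed
    qed
    then show "closed_class S N w p C"
      unfolding closed_class_def using assms(2,3) acc by blast
  qed
  have B: "communication_class S N w p C \<longrightarrow> C \<subseteq> (\<Union>i\<in>{1..N}. w i ` C)"
  proof (intro impI subsetI)
    fix y assume cc: "communication_class S N w p C" and y: "y \<in> C"
    have yS: "y \<in> S" using y assms(2) by auto
    have com: "\<forall>a\<in>C. \<forall>b\<in>C. (a, b) \<in> R\<^sup>+"
      using cc acc assms(2) unfolding communication_class_def communicating_def by blast
    then have "(y, y) \<in> R\<^sup>+" using y by auto
    then obtain z where yz: "(y, z) \<in> R\<^sup>*" and zy: "(z, y) \<in> R"
      by (meson tranclD2)
    then obtain i where i: "i \<in> {1..N}" and zS: "z \<in> S" and yw: "y = w i z"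
      unfolding R_def by auto
    have zyp: "(z, y) \<in> R\<^sup>+" using zy by auto
    have "communicating N w p (insert z C)"
      unfolding communicating_def
    proof (intro conjI ballI)
      show "insert z C \<noteq> {}" by simp
    next
      fix a b assume a: "a \<in> insert z C" and b: "b \<in> insert z C"
      have ay: "(a, y) \<in> R\<^sup>+" using a zyp com y by auto
      have yb: "(y, b) \<in> R\<^sup>+ \<or> (y = b)" using b com y yz
        by (metis insert_iff rtranclD)
      have "(a, b) \<in> R\<^sup>+" using ay yb by (meson trancl_trans)
      moreover have "a \<in> S" using a zS assms(2) by auto
      ultimately show "accessible N w p a b" using acc by auto
    qed
    moreover have "insert z C \<subseteq> S" using zS assms(2) by auto
    ultimately have "insert z C = C" using cc unfolding communication_class_def by blast
    then have "z \<in> C" by auto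
    then show "y \<in> (\<Union>i\<in>{1..N}. w i ` C)" using i yw by auto
  qed
  show ?thesis using A B by blast
qed

end
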